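(* Consider the system \[ \begin{aligned} \dot S_h(t)&=\beta_h-C_{vh}\frac{I_v(t)}{N_v(t)}S_h(t)-\mu_hS_h(t),\\ \dot I_h(t)&=C_{vh}\frac{I_v(t-\tau)}{N_v(t-\tau)}S_h(t-\tau)-\mu_hI_h(t),\\ \dot S_v(t)&=\beta_v-C_{hv}I_h(t)S_v(t)-\mu_vS_v(t),\\ \dot I_v(t)&=C_{hv}I_h(t)S_v(t)-\mu_vI_v(t), \end{aligned} \] with $N_v=S_v+I_v$, positive parameters $\beta_h,\beta_v,\mu_h,\mu_v,C_{vh},C_{hv}$ and $\tau\ge 0$. Let $R_0=\sqrt{C_{vh}C_{hv}\beta_h/(\mu_h^2\mu_v)}$, $S_v^0=\beta_v/\mu_v$, and, when $R_0>1$, let $E^*=(S_h^*,I_h^*,S_v^*,I_v^* )^T$ be the unique equilibrium with all components positive. Suppose $R_0>1$, $\theta\in(0,1)$, and let $(S_h(t),I_h(t),S_v(t),I_v(t))$ be the solution through an initial function $\varphi\in D$ satisfying $\limsup_{t\to\infty}I_h(t)\le\theta I_h^*$. Then \[ \liminf_{t\to\infty}S_v(t)\ge \bar S_v:=\frac{\beta_v}{\theta C_{hv}I_h^*+\mu_v}>S_v^*,\qquad \liminf_{t\to\infty}S_h(t)\ge \bar S_h:=\frac{\beta_h}{C_{vh}\left(1-\frac{\bar S_v}{S_v^0}\right)+\mu_h}>S_h^*. \]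
   Context: $C_+=\{\varphi\in C([-\tau,0],\mathbb{R}_+^4):\varphi_3(\theta)+\varphi_4(\theta)>0\ \forall\theta\in[-\tau,0]\}$ with the sup-norm, and $D=\{\varphi\in C_+:\varphi_2(0)>0\}$. The solution through $\varphi$ equals $\varphi$ on $[-\tau,0]$. *)

theory Defs
  imports "HOL-Analysis.Analysis"
begin

definition in_D :: "real \<Rightarrow> (real \<Rightarrow> real) \<Rightarrow> (real \<Rightarrow> real) \<Rightarrow> (real \<Rightarrow> real) \<Rightarrow> (real \<Rightarrow> real) \<Rightarrow> bool" where
  "in_D tau p1 p2 p3 p4 \<longleftrightarrow>
     continuous_on {-tau..0} p1 \<and> continuous_on {-tau..0} p2 \<and>
     continuous_on {-tau..0} p3 \<and> continuous_on {-tau..0} p4 \<and>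
     (\<forall>s\<in>{-tau..0}. p1 s \<ge> 0 \<and> p2 s \<ge> 0 \<and> p3 s \<ge> 0 \<and> p4 s \<ge> 0 \<and> p3 s + p4 s > 0) \<and>
     p2 0 > 0"

definition is_solution ::
  "real \<Rightarrow> real \<Rightarrow> real \<Rightarrow> real \<Rightarrow> real \<Rightarrow> real \<Rightarrow> real \<Rightarrow>
   (real \<Rightarrow> real) \<Rightarrow> (real \<Rightarrow> real) \<Rightarrow> (real \<Rightarrow> real) \<Rightarrow> (real \<Rightarrow> real) \<Rightarrow>
   (real \<Rightarrow> real) \<Rightarrow> (real \<Rightarrow> real) \<Rightarrow> (real \<Rightarrow> real) \<Rightarrow> (real \<Rightarrow> real) \<Rightarrow> bool" where
  "is_solution bh bv muh muv Cvh Chv tau p1 p2 p3 p4 Sh Ih Sv Iv \<longleftrightarrow>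
     continuous_on {-tau..} Sh \<and> continuous_on {-tau..} Ih \<and>
     continuous_on {-tau..} Sv \<and> continuous_on {-tau..} Iv \<and>
     (\<forall>s\<in>{-tau..0}. Sh s = p1 s \<and> Ih s = p2 s \<and> Sv s = p3 s \<and> Iv s = p4 s) \<and>
     (\<forall>t\<ge>0.
        (Sh has_real_derivative
           (bh - Cvh * (Iv t / (Sv t + Iv t)) * Sh t - muh * Sh t)) (at t within {0..}) \<and>
        (Ih has_real_derivative
           (Cvh * (Iv (t - tau) / (Sv (t - tau) + Iv (t - tau))) * Sh (t - tau) - muh * Ih t))
           (at t within {0..}) \<and>
        (Sv has_real_derivative (bv - Chv * Ih t * Sv t - muv * Sv t)) (at t within {0..}) \<and>
        (Iv has_real_derivative (Chv * Ih t * Sv t - muv * Iv t)) (at t within {0..}))"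

definition R0 :: "real \<Rightarrow> real \<Rightarrow> real \<Rightarrow> real \<Rightarrow> real \<Rightarrow> real" where
  "R0 bh muh muv Cvh Chv = sqrt (Cvh * Chv * bh / (muh\<^sup>2 * muv))"

text \<open>Equilibrium of the system (for tau the delay does not affect equilibria).\<close>
definition is_equilibrium :: "real \<Rightarrow> real \<Rightarrow> real \<Rightarrow> real \<Rightarrow> real \<Rightarrow> real \<Rightarrow>
   real \<Rightarrow> real \<Rightarrow> real \<Rightarrow> real \<Rightarrow> bool" where
  "is_equilibrium bh bv muh muv Cvh Chv Sh Ih Sv Iv \<longleftrightarrow>
     Sv + Iv \<noteq> 0 \<and>
     bh - Cvh * (Iv / (Sv + Iv)) * Sh - muh * Sh = 0 \<and>
     Cvh * (Iv / (Sv + Iv)) * Sh - muh * Ih = 0 \<and>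
     bv - Chv * Ih * Sv - muv * Sv = 0 \<and>
     Chv * Ih * Sv - muv * Iv = 0"

end

theory Submission imports Defs begin

lemma half_trick: "(y::real) \<le> x / 2 \<Longrightarrow> x / 2 \<le> x - y" by linarith

lemma barrierA:
  fixes f f' :: "real \<Rightarrow> real"
  assumes cont: "continuous_on {T..} f"
    and der: "\<And>t. t \<ge> T \<Longrightarrow> (f has_real_derivative f' t) (at t within {T..})"
    and pos: "\<And>t. t \<ge> T \<Longrightarrow> f t = c \<Longrightarrow> f' t > 0"
    and start: "f T \<ge> c"
  shows "\<And>t. t \<ge> T \<Longrightarrow> f t \<ge> c"
proof (rule ccontr)
  fix s assume s: "s \<ge> T" "\<not> c \<le> f s"
  then have sT: "s > T" using start by (cases "s = T") auto
  have cs: "continuous_on {T..s} f" using cont by (rule continuous_on_subset) auto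
  define S where "S = {T..s} \<inter> f -` {c..}"
  have clS: "closed S" unfolding S_def
    by (rule continuous_closed_preimage[OF cs]) auto
  have "T \<in> S" using start sT unfolding S_def by auto
  then have neS: "S \<noteq> {}" by blast
  have bS: "bdd_above S" unfolding S_def by (rule bdd_aboveI[of _ s]) auto
  define t0 where "t0 = Sup S"
  have t0S: "t0 \<in> S" unfolding t0_def by (rule closed_contains_Sup[OF neS bS clS])
  have le: "\<And>x. x \<in> S \<Longrightarrow> x \<le> t0" unfolding t0_def using bS by (simp add: cSup_upper)
  have t0: "T \<le> t0" "t0 \<le> s" "c \<le> f t0" using t0S unfolding S_def by auto
  have "t0 \<noteq> s" using t0 s by auto
  with t0 have t0s: "t0 < s" by auto
  have "continuous_on {t0..s} f" using cs by (rule continuous_on_subset) (use t0 in auto)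
  then obtain x where x: "t0 \<le> x" "x \<le> s" "f x = c"
    using IVT2'[of f s c t0] s t0 by auto
  then have "x \<in> S" using t0 unfolding S_def by auto
  then have "x \<le> t0" by (rule le)
  then have "x = t0" using x by simp
  with x have ft0: "f t0 = c" by simp
  have "f' t0 > 0" using pos[OF t0(1) ft0] .
  from has_real_derivative_pos_inc_right[OF der[OF t0(1)] this]
  obtain d where d: "d > 0" "\<And>h. h > 0 \<Longrightarrow> t0 + h \<in> {T..} \<Longrightarrow> h < d \<Longrightarrow> f t0 < f (t0 + h)"
    by blast
  define h where "h = min (d/2) (s - t0)"
  have h: "h > 0" "h < d" "t0 + h \<le> s" using d t0s unfolding h_def by auto
  have "f t0 < f (t0 + h)" using d(2)[OF h(1) _ h(2)] h t0 by auto
  then have "t0 + h \<in> S" using ft0 h t0 unfolding S_def by auto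
  then have "t0 + h \<le> t0" by (rule le)
  then show False using h by simp
qed

lemma barrierB:
  fixes f f' :: "real \<Rightarrow> real"
  assumes cont: "continuous_on {T..} f"
    and der: "\<And>t. t \<ge> T \<Longrightarrow> (f has_real_derivative f' t) (at t within {T..})"
    and eta: "\<eta> > 0"
    and pos: "\<And>t. t \<ge> T \<Longrightarrow> f t \<le> c \<Longrightarrow> f' t \<ge> \<eta>"
  shows "eventually (\<lambda>t. f t \<ge> c) at_top"
proof (cases "\<exists>t1\<ge>T. f t1 \<ge> c")
  case True
  then obtain t1 where t1: "t1 \<ge> T" "f t1 \<ge> c" by blast
  have c1: "continuous_on {t1..} f" using cont by (rule continuous_on_subset) (use t1 in auto)
  have d1: "(f has_real_derivative f' t) (at t within {t1..})" if "t \<ge> t1" for t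
      by (rule DERIV_subset[OF der]) (use that t1 in auto)
  have p1: "f' t > 0" if "t \<ge> t1" "f t = c" for t using pos[of t] that t1 eta by auto
  have "\<And>t. t \<ge> t1 \<Longrightarrow> f t \<ge> c" by (rule barrierA[OF c1 d1 p1 t1(2)])
  then show ?thesis unfolding eventually_at_top_linorder by blast
next
  case False
  have lt: "f t < c" if "t \<ge> T" for t
  proof -
    have "\<not> c \<le> f t" using False that by blast
    then show ?thesis by linarith
  qed
  define b where "b = T + (c - f T) / \<eta> + 1"
  have bT: "T \<le> b" using lt[of T] eta unfolding b_def by (auto simp: field_simps)
  have dd: "(f has_derivative (\<lambda>h. f' x * h)) (at x within {T..b})" if "T \<le> x" "x \<le> b" for x
  proof -
    have "(f has_real_derivative f' x) (at x within {T..b})"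
      by (rule DERIV_subset[OF der]) (use that in auto)
    then show ?thesis by (simp add: has_field_derivative_def)
  qed
  have "\<exists>x\<in>{T..b}. f b - f T = (\<lambda>h. f' x * h) (b - T)"
    by (rule mvt_very_simple[OF bT dd])
  then obtain x where x: "T \<le> x" "x \<le> b" "f b - f T = f' x * (b - T)" by auto
  have "f' x \<ge> \<eta>" using pos[of x] lt[of x] x by auto
  then have "f' x * (b - T) \<ge> \<eta> * (b - T)" using bT by (simp add: mult_right_mono)
  moreover have "\<eta> * (b - T) = c - f T + \<eta>" unfolding b_def using eta by (simp add: field_simps)
  ultimately have "f b \<ge> c + \<eta>" using x by linarith
  then show ?thesis using lt[OF bT] eta by linarith
qed

lemma Liminf_geI:
  fixes f :: "real \<Rightarrow> real"
  assumes "\<And>y. y < L \<Longrightarrow> eventually (\<lambda>t. y < f t) at_top"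
  shows "ereal L \<le> Liminf at_top (\<lambda>t. ereal (f t))"
  unfolding le_Liminf_iff
proof (intro allI impI)
  fix y assume "y < ereal L"
  then obtain r where r: "y < ereal r" "ereal r < ereal L" using ereal_dense2 by blast
  have "eventually (\<lambda>t. r < f t) at_top" using assms r by simp
  then show "eventually (\<lambda>t. y < ereal (f t)) at_top"
    by eventually_elim (use r in \<open>auto intro: less_trans\<close>)
qed


theorem lemma2:
  fixes bh bv muh muv Cvh Chv tau theta :: real
    and p1 p2 p3 p4 Sh Ih Sv Iv :: "real \<Rightarrow> real"
    and Shs Ihs Svs Ivs :: real
  assumes pos: "bh > 0" "bv > 0" "muh > 0" "muv > 0" "Cvh > 0" "Chv > 0" "tau \<ge> 0"
    and R0: "R0 bh muh muv Cvh Chv > 1"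
    and Estar: "is_equilibrium bh bv muh muv Cvh Chv Shs Ihs Svs Ivs"
               "Shs > 0" "Ihs > 0" "Svs > 0" "Ivs > 0"
    and theta: "0 < theta" "theta < 1"
    and init: "in_D tau p1 p2 p3 p4"
    and sol: "is_solution bh bv muh muv Cvh Chv tau p1 p2 p3 p4 Sh Ih Sv Iv"
    and lsup: "Limsup at_top (\<lambda>t. ereal (Ih t)) \<le> ereal (theta * Ihs)"
  shows "Liminf at_top (\<lambda>t. ereal (Sv t)) \<ge> ereal (bv / (theta * Chv * Ihs + muv))
       \<and> bv / (theta * Chv * Ihs + muv) > Svs
       \<and> Liminf at_top (\<lambda>t. ereal (Sh t))
           \<ge> ereal (bh / (Cvh * (1 - (bv / (theta * Chv * Ihs + muv)) / (bv / muv)) + muh))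
       \<and> bh / (Cvh * (1 - (bv / (theta * Chv * Ihs + muv)) / (bv / muv)) + muh) > Shs"
proof -
  define a where "a = theta * Chv * Ihs + muv"
  define L1 where "L1 = bv / a"
  define Sv0 where "Sv0 = bv / muv"
  define k where "k = 1 - L1 / Sv0"
  define b2 where "b2 = Cvh * k + muh"
  define L2 where "L2 = bh / b2"
  have tci: "theta * Chv * Ihs > 0" using pos theta Estar by simp
  have a_pos: "a > 0" "a > muv" using pos tci unfolding a_def by auto
  have Sv0_pos: "Sv0 > 0" unfolding Sv0_def using pos by simp
  have L1_pos: "L1 > 0" unfolding L1_def using pos a_pos by simp
  have L1_lt: "L1 < Sv0" unfolding L1_def Sv0_def
    using a_pos pos by (simp add: divide_strict_left_mono)
  have k_pos: "k > 0" unfolding k_def using L1_lt Sv0_pos by simp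
  have b2_pos: "b2 > 0" unfolding b2_def using k_pos pos by (intro add_pos_pos mult_pos_pos)
  have L2_pos: "L2 > 0" unfolding L2_def using b2_pos pos by simp
  have aL1: "a * L1 = bv" unfolding L1_def using a_pos by simp
  have bL2: "b2 * L2 = bh" unfolding L2_def using b2_pos by simp

  from Estar(1) have E: "Svs + Ivs \<noteq> 0"
    "bh - Cvh * (Ivs / (Svs + Ivs)) * Shs - muh * Shs = 0"
    "bv - Chv * Ihs * Svs - muv * Svs = 0"
    "Chv * Ihs * Svs - muv * Ivs = 0"
    unfolding is_equilibrium_def by auto
  have Nvs: "Svs + Ivs = Sv0" unfolding Sv0_def using E pos by (simp add: field_simps)
  have Svs_eq: "Svs = bv / (Chv * Ihs + muv)"
  proof -
    have "Svs * (Chv * Ihs + muv) = bv" using E(3) by (simp add: algebra_simps)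
    moreover have "Chv * Ihs + muv > 0" using pos Estar by (intro add_pos_pos mult_pos_pos) auto
    ultimately show ?thesis by (simp add: eq_divide_eq)
  qed
  have ci: "Chv * Ihs > 0" using pos Estar by simp
  have "theta * (Chv * Ihs) < 1 * (Chv * Ihs)" using theta ci by (intro mult_strict_right_mono) auto
  then have aless: "a < Chv * Ihs + muv" unfolding a_def by (simp add: mult.assoc)
  have Svs_lt: "Svs < L1" unfolding Svs_eq L1_def
    using a_pos pos aless
    by (intro divide_strict_left_mono) auto
  define q where "q = Ivs / (Svs + Ivs)"
  have q_eq: "q = 1 - Svs / Sv0" unfolding q_def Nvs using Sv0_pos Nvs by (simp add: field_simps)
  have qk: "q > k" unfolding q_eq k_def using Svs_lt Sv0_pos by (simp add: divide_strict_right_mono)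
  have Shs_eq: "Shs = bh / (Cvh * q + muh)"
  proof -
    have "Shs * (Cvh * q + muh) = bh" using E(2) unfolding q_def by (simp add: algebra_simps)
    moreover have "Cvh * q + muh > 0" using qk k_pos pos by (intro add_pos_pos mult_pos_pos) auto
    ultimately show ?thesis by (simp add: field_simps)
  qed
  have hq: "Cvh * q + muh > 0" using qk k_pos pos by (intro add_pos_pos mult_pos_pos) auto
  have "Cvh * k < Cvh * q" using qk pos by simp
  then have "b2 < Cvh * q + muh" unfolding b2_def by simp
  then have Shs_lt: "Shs < L2" unfolding Shs_eq L2_def
    using hq pos b2_pos
    by (intro divide_strict_left_mono) auto

  from sol have cSh: "continuous_on {-tau..} Sh" and cIh: "continuous_on {-tau..} Ih"
    and cSv: "continuous_on {-tau..} Sv" and cIv: "continuous_on {-tau..} Iv"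
    and ini: "\<And>s. s \<in> {-tau..0} \<Longrightarrow> Sh s = p1 s \<and> Ih s = p2 s \<and> Sv s = p3 s \<and> Iv s = p4 s"
    and ders: "\<And>t. t \<ge> 0 \<Longrightarrow>
        (Sh has_real_derivative
           (bh - Cvh * (Iv t / (Sv t + Iv t)) * Sh t - muh * Sh t)) (at t within {0..}) \<and>
        (Sv has_real_derivative (bv - Chv * Ih t * Sv t - muv * Sv t)) (at t within {0..}) \<and>
        (Iv has_real_derivative (Chv * Ih t * Sv t - muv * Iv t)) (at t within {0..})"
    unfolding is_solution_def by auto
  have dSh: "\<And>t. t \<ge> 0 \<Longrightarrow> (Sh has_real_derivative
           (bh - Cvh * (Iv t / (Sv t + Iv t)) * Sh t - muh * Sh t)) (at t within {0..})"
    using ders by blast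
  have dSv: "\<And>t. t \<ge> 0 \<Longrightarrow>
     (Sv has_real_derivative (bv - Chv * Ih t * Sv t - muv * Sv t)) (at t within {0..})"
    using ders by blast
  have dIv: "\<And>t. t \<ge> 0 \<Longrightarrow>
     (Iv has_real_derivative (Chv * Ih t * Sv t - muv * Iv t)) (at t within {0..})"
    using ders by blast
  have sub: "\<And>T. T \<ge> 0 \<Longrightarrow> {T..} \<subseteq> {-tau..}" using pos(7) by auto
  have p0: "p1 0 \<ge> 0" "p3 0 \<ge> 0" "p3 0 + p4 0 > 0" using init unfolding in_D_def
    using pos(7) by auto
  have i0: "Sh 0 = p1 0" "Sv 0 = p3 0" "Iv 0 = p4 0" using ini[of 0] pos(7) by auto

  have Sv_nn: "\<And>t. t \<ge> 0 \<Longrightarrow> Sv t \<ge> 0"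
  proof -
    have c0: "continuous_on {0..} Sv" by (rule continuous_on_subset[OF cSv sub]) simp
    have d0: "(Sv has_real_derivative (bv - Chv * Ih t * Sv t - muv * Sv t)) (at t within {0..})"
      if "t \<ge> 0" for t using dSv that by blast
    have q0: "bv - Chv * Ih t * Sv t - muv * Sv t > 0" if "t \<ge> 0" "Sv t = 0" for t
      using that pos by simp
    have s0: "Sv 0 \<ge> 0" using i0 p0 by simp
    show "\<And>t. t \<ge> 0 \<Longrightarrow> Sv t \<ge> 0" by (rule barrierA[OF c0 d0 q0 s0])
  qed
  have Sh_nn: "\<And>t. t \<ge> 0 \<Longrightarrow> Sh t \<ge> 0"
  proof -
    have c0: "continuous_on {0..} Sh" by (rule continuous_on_subset[OF cSh sub]) simp
    have d0: "(Sh has_real_derivative (bh - Cvh * (Iv t / (Sv t + Iv t)) * Sh t - muh * Sh t))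
       (at t within {0..})"
      if "t \<ge> 0" for t using dSh that by blast
    have q0: "bh - Cvh * (Iv t / (Sv t + Iv t)) * Sh t - muh * Sh t > 0" if "t \<ge> 0" "Sh t = 0" for t
      using that pos by simp
    have s0: "Sh 0 \<ge> 0" using i0 p0 by simp
    show "\<And>t. t \<ge> 0 \<Longrightarrow> Sh t \<ge> 0" by (rule barrierA[OF c0 d0 q0 s0])
  qed

  have svb: "eventually (\<lambda>t. y < Sv t) at_top" if y: "y < L1" for y
  proof -
    define c where "c = (y + L1) / 2"
    have c: "y < c" "c < L1" using y unfolding c_def by auto
    have "a * c < a * L1" using c a_pos by (intro mult_strict_left_mono) auto
    then have g: "bv - a * c > 0" using aL1 by linarith
    define eps where "eps = (bv - a * c) / (2 * Chv * (\<bar>c\<bar> + 1))"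
    have eps: "eps > 0" unfolding eps_def using g pos by simp
    have epsc: "Chv * eps * c \<le> (bv - a * c) / 2"
    proof -
      have "Chv * eps * c \<le> Chv * eps * (\<bar>c\<bar> + 1)"
        using eps pos by (intro mult_left_mono) auto
      also have "\<dots> = (bv - a * c) / 2"
      proof -
        define D where "D = 2 * Chv * (\<bar>c\<bar> + 1)"
        have D: "D > 0" unfolding D_def using pos by (intro mult_pos_pos) auto
        have "eps * D = (bv - a * c)" unfolding eps_def D_def[symmetric] using D by simp
        moreover have "Chv * eps * (\<bar>c\<bar> + 1) = eps * D / 2" unfolding D_def by simp
        ultimately show ?thesis by simp
      qed
      finally show ?thesis .
    qed
    have "Limsup at_top (\<lambda>t. ereal (Ih t)) < ereal (theta * Ihs + eps)"
    proof -
      have "ereal (theta * Ihs) < ereal (theta * Ihs + eps)" using eps by simp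
      then show ?thesis using lsup by (rule order.strict_trans1[rotated])
    qed
    then have "eventually (\<lambda>t. ereal (Ih t) < ereal (theta * Ihs + eps)) at_top"
      by (rule Limsup_lessD)
    then obtain N0 where N0: "\<And>t. t \<ge> N0 \<Longrightarrow> Ih t < theta * Ihs + eps"
      unfolding eventually_at_top_linorder by auto
    define T where "T = max N0 0"
    have "eventually (\<lambda>t. Sv t \<ge> c) at_top"
    proof (rule barrierB[where T = T and f' = "\<lambda>t. bv - Chv * Ih t * Sv t - muv * Sv t"
          and \<eta> = "(bv - a * c) / 2"])
      show "continuous_on {T..} Sv" by (rule continuous_on_subset[OF cSv sub]) (simp add: T_def)
      show "(Sv has_real_derivative bv - Chv * Ih t * Sv t - muv * Sv t) (at t within {T..})"
        if "t \<ge> T" for t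
        by (rule DERIV_subset[OF dSv]) (use that in \<open>auto simp: T_def\<close>)
      show "(bv - a * c) / 2 > 0" using g by simp
      show "bv - Chv * Ih t * Sv t - muv * Sv t \<ge> (bv - a * c) / 2"
        if t: "t \<ge> T" "Sv t \<le> c" for t
      proof -
        have nn: "Sv t \<ge> 0" using Sv_nn t unfolding T_def by auto
        have ih: "Ih t \<le> theta * Ihs + eps" using N0[of t] t unfolding T_def by auto
        have "Chv * Ih t * Sv t \<le> Chv * (theta * Ihs + eps) * Sv t"
          using ih nn pos by (intro mult_right_mono mult_left_mono) auto
        moreover have "(a + Chv * eps) * Sv t \<le> (a + Chv * eps) * c"
          using t a_pos eps pos by (intro mult_left_mono) auto
        moreover have "Chv * (theta * Ihs + eps) * Sv t + muv * Sv t = (a + Chv * eps) * Sv t"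
          unfolding a_def by (simp add: algebra_simps)
        ultimately have "bv - Chv * Ih t * Sv t - muv * Sv t \<ge> bv - (a + Chv * eps) * c"
          by linarith
        note A = this
        have B: "bv - (a + Chv * eps) * c \<ge> (bv - a * c) / 2"
        proof -
          have "(bv - a * c) / 2 \<le> (bv - a * c) - Chv * eps * c" using epsc by (rule half_trick)
          also have "(bv - a * c) - Chv * eps * c = bv - (a + Chv * eps) * c" by (simp add: algebra_simps)
          finally show ?thesis .
        qed
        show ?thesis using B A by (rule order_trans)
      qed
    qed
    then show ?thesis by eventually_elim (use c in auto)
  qed

  define N where "N = (\<lambda>t. Sv t + Iv t)"
  have dN: "(N has_real_derivative (bv - muv * N t)) (at t within {0..})" if "t \<ge> 0" for t
    unfolding N_def
    by (rule DERIV_cong[OF DERIV_add[OF dSv[OF that] dIv[OF that]]]) (simp add: algebra_simps)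
  have cN: "continuous_on {0..} N" unfolding N_def
    by (intro continuous_intros continuous_on_subset[OF cSv sub] continuous_on_subset[OF cIv sub]) auto
  have Nlow: "eventually (\<lambda>t. N t \<ge> Sv0 / 2) at_top"
  proof (rule barrierB[where T = 0 and f' = "\<lambda>t. bv - muv * N t" and \<eta> = "bv / 2"])
    show "bv - muv * N t \<ge> bv / 2" if "t \<ge> 0" "N t \<le> Sv0 / 2" for t
    proof -
      have "muv * N t \<le> muv * (Sv0 / 2)" using that pos by (intro mult_left_mono) auto
      also have "\<dots> = bv / 2" unfolding Sv0_def using pos by simp
      finally show ?thesis by simp
    qed
  qed (use cN dN pos in auto)
  have Nup: "eventually (\<lambda>t. N t \<le> Sv0 + d) at_top" if d: "d > 0" for d
  proof -
    have "eventually (\<lambda>t. - N t \<ge> - (Sv0 + d)) at_top"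
    proof (rule barrierB[where T = 0 and f' = "\<lambda>t. - (bv - muv * N t)" and \<eta> = "muv * d"])
      show "continuous_on {0..} (\<lambda>t. - N t)" using cN by (intro continuous_intros)
      show "((\<lambda>t. - N t) has_real_derivative - (bv - muv * N t)) (at t within {0..})"
        if "t \<ge> 0" for t using dN[OF that] by (rule DERIV_minus)
      show "- (bv - muv * N t) \<ge> muv * d" if "t \<ge> 0" "- N t \<le> - (Sv0 + d)" for t
      proof -
        have "muv * (Sv0 + d) \<le> muv * N t" using that pos by (intro mult_left_mono) auto
        moreover have "muv * (Sv0 + d) = bv + muv * d" unfolding Sv0_def using pos
          by (simp add: field_simps)
        ultimately show ?thesis by simp
      qed
    qed (use pos d in auto)
    then show ?thesis by eventually_elim auto
  qed

  have shb: "eventually (\<lambda>t. y < Sh t) at_top" if y: "y < L2" for y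
  proof -
    define c where "c = (y + L2) / 2"
    have c: "y < c" "c < L2" using y unfolding c_def by auto
    have "b2 * c < b2 * L2" using c b2_pos by (intro mult_strict_left_mono) auto
    then have g: "bh - b2 * c > 0" using bL2 by linarith
    define eps where "eps = (bh - b2 * c) / (2 * Cvh * (\<bar>c\<bar> + 1))"
    have eps: "eps > 0" unfolding eps_def using g pos by simp
    have epsc: "Cvh * eps * c \<le> (bh - b2 * c) / 2"
    proof -
      have "Cvh * eps * c \<le> Cvh * eps * (\<bar>c\<bar> + 1)"
        using eps pos by (intro mult_left_mono) auto
      also have "\<dots> = (bh - b2 * c) / 2"
      proof -
        define D where "D = 2 * Cvh * (\<bar>c\<bar> + 1)"
        have D: "D > 0" unfolding D_def using pos by (intro mult_pos_pos) auto
        have "eps * D = (bh - b2 * c)" unfolding eps_def D_def[symmetric] using D by simp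
        moreover have "Cvh * eps * (\<bar>c\<bar> + 1) = eps * D / 2" unfolding D_def by simp
        ultimately show ?thesis by simp
      qed
      finally show ?thesis .
    qed
    define m where "m = L1 / Sv0 - eps"
    define d where "d = eps * Sv0 / (1 + L1 / Sv0)"
    have opos: "1 + L1 / Sv0 > 0" using Sv0_pos L1_pos by (intro add_pos_pos) auto
    have dpos: "d > 0" unfolding d_def using eps Sv0_pos opos by simp
    have dd: "d * (1 + L1 / Sv0) = eps * Sv0" unfolding d_def using opos by simp
    have "eventually (\<lambda>t. L1 - d < Sv t \<and> N t \<le> Sv0 + d \<and> N t \<ge> Sv0 / 2) at_top"
      using svb[of "L1 - d"] Nup[OF dpos] Nlow dpos by (auto intro: eventually_conj)
    then obtain N0 where N0: "\<And>t. t \<ge> N0 \<Longrightarrow> L1 - d < Sv t \<and> N t \<le> Sv0 + d \<and> N t \<ge> Sv0 / 2"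
      unfolding eventually_at_top_linorder by auto
    define T where "T = max N0 0"
    have ratio: "Iv t / (Sv t + Iv t) \<le> k + eps" if t: "t \<ge> T" for t
    proof -
      have tt: "L1 - d < Sv t" "N t \<le> Sv0 + d" "N t \<ge> Sv0 / 2" "t \<ge> 0"
        using N0[of t] t unfolding T_def by auto
      have Npos: "N t > 0" using tt Sv0_pos by linarith
      have svnn: "Sv t \<ge> 0" using Sv_nn tt by auto
      have mN: "m * N t \<le> Sv t"
      proof (cases "m \<le> 0")
        case True
        then have "m * N t \<le> 0" using Npos by (simp add: mult_nonpos_nonneg)
        then show ?thesis using svnn by linarith
      next
        case False
        then have "m * N t \<le> m * (Sv0 + d)" using tt by (intro mult_left_mono) auto
        also have "m * (Sv0 + d) = L1 + d * (L1 / Sv0) - eps * Sv0 - eps * d"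
          unfolding m_def using Sv0_pos by (simp add: field_simps)
        also have "\<dots> = L1 - d - eps * d" using dd by (simp add: algebra_simps)
        also have "\<dots> \<le> L1 - d" using eps dpos by simp
        finally show ?thesis using tt by linarith
      qed
      have "Iv t \<le> (k + eps) * N t" using mN unfolding m_def k_def N_def
        by (simp add: algebra_simps)
      then show ?thesis using Npos unfolding N_def by (simp add: pos_divide_le_eq)
    qed
    have "eventually (\<lambda>t. Sh t \<ge> c) at_top"
    proof (rule barrierB[where T = T and
          f' = "\<lambda>t. bh - Cvh * (Iv t / (Sv t + Iv t)) * Sh t - muh * Sh t"
          and \<eta> = "(bh - b2 * c) / 2"])
      show "continuous_on {T..} Sh" by (rule continuous_on_subset[OF cSh sub]) (simp add: T_def)
      show "(Sh has_real_derivative bh - Cvh * (Iv t / (Sv t + Iv t)) * Sh t - muh * Sh t)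
          (at t within {T..})"
        if "t \<ge> T" for t
        by (rule DERIV_subset[OF dSh]) (use that in \<open>auto simp: T_def\<close>)
      show "(bh - b2 * c) / 2 > 0" using g by simp
      show "bh - Cvh * (Iv t / (Sv t + Iv t)) * Sh t - muh * Sh t \<ge> (bh - b2 * c) / 2"
        if t: "t \<ge> T" "Sh t \<le> c" for t
      proof -
        have nn: "Sh t \<ge> 0" using Sh_nn t unfolding T_def by auto
        have r: "Iv t / (Sv t + Iv t) \<le> k + eps" using ratio t by auto
        have "Cvh * (Iv t / (Sv t + Iv t)) * Sh t \<le> Cvh * (k + eps) * Sh t"
          using r nn pos by (intro mult_right_mono mult_left_mono) auto
        moreover have "(b2 + Cvh * eps) * Sh t \<le> (b2 + Cvh * eps) * c"
          using t b2_pos eps pos by (intro mult_left_mono) auto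
        moreover have "Cvh * (k + eps) * Sh t + muh * Sh t = (b2 + Cvh * eps) * Sh t"
          unfolding b2_def by (simp add: algebra_simps)
        ultimately have "bh - Cvh * (Iv t / (Sv t + Iv t)) * Sh t - muh * Sh t
            \<ge> bh - (b2 + Cvh * eps) * c"
          by linarith
        note A = this
        have B: "bh - (b2 + Cvh * eps) * c \<ge> (bh - b2 * c) / 2"
        proof -
          have "(bh - b2 * c) / 2 \<le> (bh - b2 * c) - Cvh * eps * c" using epsc by (rule half_trick)
          also have "(bh - b2 * c) - Cvh * eps * c = bh - (b2 + Cvh * eps) * c" by (simp add: algebra_simps)
          finally show ?thesis .
        qed
        show ?thesis using B A by (rule order_trans)
      qed
    qed
    then show ?thesis by eventually_elim (use c in auto)
  qed

  have r1: "ereal L1 \<le> Liminf at_top (\<lambda>t. ereal (Sv t))" by (rule Liminf_geI) (rule svb)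
  have r2: "ereal L2 \<le> Liminf at_top (\<lambda>t. ereal (Sh t))" by (rule Liminf_geI) (rule shb)
  show ?thesis
    using r1 r2 Svs_lt Shs_lt unfolding L2_def b2_def k_def L1_def Sv0_def a_def by simp
qed

end
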